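(* Let $\mathcal{A}$ be a complex vector space with two bilinear operations $[\cdot,\cdot]$ and $\circ$ and a linear endomorphism $\alpha$. Let $\mathcal{L}(\mathcal{A})=\mathcal{A}\otimes\mathbb{C}[t,t^{-1}]$ with bilinear bracket $[u\otimes t^m,v\otimes t^n]=[u,v]\otimes t^{m+n}+m\,(u\circ v)\otimes t^{m+n-1}-n\,(v\circ u)\otimes t^{m+n-1}$ for $u,v\in\mathcal{A}$, $m,n\in\mathbb{Z}$, and linear map $\varphi(u\otimes t^m)=\alpha(u)\otimes t^m$. Then $(\mathcal{L}(\mathcal{A}),[-,-],\varphi)$ is a Hom-Lie algebra if and only if $(\mathcal{A},[\cdot,\cdot],\circ,\alpha)$ is a Hom Gel'fand-Dorfman bialgebra.
   Context: A Hom-Lie algebra is a vector space $L$ with a bilinear map $[\cdot,\cdot]$ and linear map $\alpha$ with $[x,y]=-[y,x]$ and $[[x,y],\alpha(z)]+[[y,z],\alpha(x)]+[[z,x],\alpha(y)]=0$ for all $x,y,z$. A Hom-Novikov algebra is a vector space with a bilinear operation $\circ$ and a linear endomorphism $\alpha$ such that $(x\circ y)\circ\alpha(z)-\alpha(x)\circ(y\circ z)=(y\circ x)\circ\alpha(z)-\alpha(y)\circ(x\circ z)$ and $(x\circ y)\circ\alpha(z)=(x\circ z)\circ\alpha(y)$ for all $x,y,z$. A Hom Gel'fand-Dorfman bialgebra is a vector space $\mathcal{A}$ with a linear endomorphism $\alpha$ and two bilinear operations $[\cdot,\cdot],\circ$ such that $(\mathcal{A},[\cdot,\cdot],\alpha)$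 is a Hom-Lie algebra, $(\mathcal{A},\circ,\alpha)$ is a Hom-Novikov algebra, and $[x\circ y,\alpha(z)]-[x\circ z,\alpha(y)]+[x,y]\circ\alpha(z)-[x,z]\circ\alpha(y)-\alpha(x)\circ[y,z]=0$ for all $x,y,z$. *)

theory Defs
  imports Complex_Main "HOL-Library.Function_Algebras"
begin

text \<open>A complex vector space is modelled by a type 'a :: ab_group_add together with a
scalar multiplication sc :: complex \<Rightarrow> 'a \<Rightarrow> 'a satisfying the vector space axioms
(locale vector_space).\<close>

definition subspace_on :: "(complex \<Rightarrow> 'v \<Rightarrow> 'v) \<Rightarrow> ('v::ab_group_add) set \<Rightarrow> bool" where
  "subspace_on sc V \<longleftrightarrow> 0 \<in> V \<and> (\<forall>x\<in>V. \<forall>y\<in>V. x + y \<in> V) \<and> (\<forall>c. \<forall>x\<in>V. sc c x \<in> V)"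

definition linear_on :: "(complex \<Rightarrow> 'v \<Rightarrow> 'v) \<Rightarrow> ('v::ab_group_add) set \<Rightarrow> ('v \<Rightarrow> 'v) \<Rightarrow> bool" where
  "linear_on sc V f \<longleftrightarrow> (\<forall>x\<in>V. f x \<in> V) \<and>
     (\<forall>x\<in>V. \<forall>y\<in>V. f (x + y) = f x + f y) \<and> (\<forall>c. \<forall>x\<in>V. f (sc c x) = sc c (f x))"

definition bilinear_on :: "(complex \<Rightarrow> 'v \<Rightarrow> 'v) \<Rightarrow> ('v::ab_group_add) set \<Rightarrow> ('v \<Rightarrow> 'v \<Rightarrow> 'v) \<Rightarrow> bool" where
  "bilinear_on sc V b \<longleftrightarrow> (\<forall>x\<in>V. \<forall>y\<in>V. b x y \<in> V) \<and>
     (\<forall>x\<in>V. \<forall>y\<in>V. \<forall>z\<in>V. b (x + y) z = b x z + b y z \<and> b z (x + y) = b z x + b z y) \<and>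
     (\<forall>c. \<forall>x\<in>V. \<forall>y\<in>V. b (sc c x) y = sc c (b x y) \<and> b x (sc c y) = sc c (b x y))"

definition hom_lie_on ::
  "(complex \<Rightarrow> 'v \<Rightarrow> 'v) \<Rightarrow> ('v::ab_group_add) set \<Rightarrow> ('v \<Rightarrow> 'v \<Rightarrow> 'v) \<Rightarrow> ('v \<Rightarrow> 'v) \<Rightarrow> bool" where
  "hom_lie_on sc V br al \<longleftrightarrow> subspace_on sc V \<and> bilinear_on sc V br \<and> linear_on sc V al \<and>
     (\<forall>x\<in>V. \<forall>y\<in>V. br x y = - br y x) \<and>
     (\<forall>x\<in>V. \<forall>y\<in>V. \<forall>z\<in>V. br (br x y) (al z) + br (br y z) (al x) + br (br z x) (al y) = 0)"

definition hom_novikov_on ::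
  "(complex \<Rightarrow> 'v \<Rightarrow> 'v) \<Rightarrow> ('v::ab_group_add) set \<Rightarrow> ('v \<Rightarrow> 'v \<Rightarrow> 'v) \<Rightarrow> ('v \<Rightarrow> 'v) \<Rightarrow> bool" where
  "hom_novikov_on sc V nv al \<longleftrightarrow> subspace_on sc V \<and> bilinear_on sc V nv \<and> linear_on sc V al \<and>
     (\<forall>x\<in>V. \<forall>y\<in>V. \<forall>z\<in>V.
        nv (nv x y) (al z) - nv (al x) (nv y z) = nv (nv y x) (al z) - nv (al y) (nv x z)) \<and>
     (\<forall>x\<in>V. \<forall>y\<in>V. \<forall>z\<in>V. nv (nv x y) (al z) = nv (nv x z) (al y))"

definition hom_GD_bialgebra_on ::
  "(complex \<Rightarrow> 'v \<Rightarrow> 'v) \<Rightarrow> ('v::ab_group_add) set \<Rightarrow> ('v \<Rightarrow> 'v \<Rightarrow> 'v) \<Rightarrow> ('v \<Rightarrow> 'v \<Rightarrow> 'v)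
     \<Rightarrow> ('v \<Rightarrow> 'v) \<Rightarrow> bool" where
  "hom_GD_bialgebra_on sc V br nv al \<longleftrightarrow> hom_lie_on sc V br al \<and> hom_novikov_on sc V nv al \<and>
     (\<forall>x\<in>V. \<forall>y\<in>V. \<forall>z\<in>V.
        br (nv x y) (al z) - br (nv x z) (al y) + nv (br x y) (al z) - nv (br x z) (al y)
          - nv (al x) (br y z) = 0)"

text \<open>The loop space L(A) = A \<otimes> C[t,t^-1] is modelled as the finitely supported functions
int \<Rightarrow> 'a, where f corresponds to \<Sum>m. f m \<otimes> t^m.\<close>

definition fsupp :: "(int \<Rightarrow> 'a::zero) \<Rightarrow> int set" where
  "fsupp f = {m. f m \<noteq> 0}"

definition loop_space :: "(int \<Rightarrow> 'a::zero) set" where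
  "loop_space = {f. finite (fsupp f)}"

definition loop_scale :: "(complex \<Rightarrow> 'a \<Rightarrow> 'a) \<Rightarrow> complex \<Rightarrow> (int \<Rightarrow> 'a) \<Rightarrow> int \<Rightarrow> 'a" where
  "loop_scale sc c f = (\<lambda>k. sc c (f k))"

text \<open>Bilinear extension of
 [u t^m, v t^n] = [u,v] t^(m+n) + m (u\<circ>v) t^(m+n-1) - n (v\<circ>u) t^(m+n-1).\<close>
definition loop_bracket ::
  "(complex \<Rightarrow> 'a \<Rightarrow> 'a) \<Rightarrow> ('a \<Rightarrow> 'a \<Rightarrow> 'a) \<Rightarrow> ('a \<Rightarrow> 'a \<Rightarrow> 'a)
     \<Rightarrow> (int \<Rightarrow> 'a::ab_group_add) \<Rightarrow> (int \<Rightarrow> 'a) \<Rightarrow> int \<Rightarrow> 'a" where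
  "loop_bracket sc br nv f g = (\<lambda>k.
     (\<Sum>m\<in>fsupp f. \<Sum>n\<in>fsupp g.
        (if m + n = k then br (f m) (g n) else 0)
      + (if m + n - 1 = k then sc (of_int m) (nv (f m) (g n)) - sc (of_int n) (nv (g n) (f m))
         else 0)))"

definition loop_phi :: "('a \<Rightarrow> 'a) \<Rightarrow> (int \<Rightarrow> 'a) \<Rightarrow> int \<Rightarrow> 'a" where
  "loop_phi al f = (\<lambda>k. al (f k))"

end

theory Submission
  imports Defs
begin

fun PhiL :: "(complex \<Rightarrow> 'a \<Rightarrow> 'a) \<Rightarrow> 'a list \<Rightarrow> complex list \<Rightarrow> 'a::ab_group_add" where
  "PhiL sc (x#xs) (c#cs) = sc c x + PhiL sc xs cs"
| "PhiL sc _ _ = 0"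

locale GDS = vector_space sc for sc :: "complex \<Rightarrow> 'a::ab_group_add \<Rightarrow> 'a" +
  fixes br nv :: "'a \<Rightarrow> 'a \<Rightarrow> 'a" and al :: "'a \<Rightarrow> 'a"
  assumes brb: "bilinear_on sc UNIV br" and nvb: "bilinear_on sc UNIV nv"
    and all: "linear_on sc UNIV al"
begin

lemma br_add1[simp]: "br (x+y) z = br x z + br y z" using brb by (simp add: bilinear_on_def)
lemma br_add2[simp]: "br z (x+y) = br z x + br z y" using brb by (simp add: bilinear_on_def)
lemma br_sc1[simp]: "br (sc c x) y = sc c (br x y)" using brb by (simp add: bilinear_on_def)
lemma br_sc2[simp]: "br x (sc c y) = sc c (br x y)" using brb by (simp add: bilinear_on_def)
lemma nv_add1[simp]: "nv (x+y) z = nv x z + nv y z" using nvb by (simp add: bilinear_on_def)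
lemma nv_add2[simp]: "nv z (x+y) = nv z x + nv z y" using nvb by (simp add: bilinear_on_def)
lemma nv_sc1[simp]: "nv (sc c x) y = sc c (nv x y)" using nvb by (simp add: bilinear_on_def)
lemma nv_sc2[simp]: "nv x (sc c y) = sc c (nv x y)" using nvb by (simp add: bilinear_on_def)
lemma al_add[simp]: "al (x+y) = al x + al y" using all by (simp add: linear_on_def)
lemma al_sc[simp]: "al (sc c x) = sc c (al x)" using all by (simp add: linear_on_def)

lemma br_lin1: "additive (\<lambda>x. br x y)" by standard simp
lemma br_lin2: "additive (\<lambda>x. br y x)" by standard simp
lemma nv_lin1: "additive (\<lambda>x. nv x y)" by standard simp
lemma nv_lin2: "additive (\<lambda>x. nv y x)" by standard simp
lemma al_lin: "additive al" by standard simp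

lemma br_zero1[simp]: "br 0 y = 0" and br_minus1[simp]: "br (-x) y = - br x y"
  and br_diff1[simp]: "br (x - x') y = br x y - br x' y"
  and br_sum1: "br (sum f S) y = (\<Sum>i\<in>S. br (f i) y)"
  using additive.zero[OF br_lin1] additive.minus[OF br_lin1] additive.diff[OF br_lin1]
    additive.sum[OF br_lin1] by auto
lemma br_zero2[simp]: "br y 0 = 0" and br_minus2[simp]: "br y (-x) = - br y x"
  and br_diff2[simp]: "br y (x - x') = br y x - br y x'"
  using additive.zero[OF br_lin2] additive.minus[OF br_lin2] additive.diff[OF br_lin2] by auto
lemma nv_zero1[simp]: "nv 0 y = 0" and nv_minus1[simp]: "nv (-x) y = - nv x y"
  and nv_diff1[simp]: "nv (x - x') y = nv x y - nv x' y"
  using additive.zero[OF nv_lin1] additive.minus[OF nv_lin1] additive.diff[OF nv_lin1] by auto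
lemma nv_zero2[simp]: "nv y 0 = 0" and nv_minus2[simp]: "nv y (-x) = - nv y x"
  and nv_diff2[simp]: "nv y (x - x') = nv y x - nv y x'"
  using additive.zero[OF nv_lin2] additive.minus[OF nv_lin2] additive.diff[OF nv_lin2] by auto
lemma al_zero[simp]: "al 0 = 0" and al_minus[simp]: "al (-x) = - al x"
  and al_diff[simp]: "al (x - x') = al x - al x'"
  using additive.zero[OF al_lin] additive.minus[OF al_lin] additive.diff[OF al_lin] by auto

definition TT :: "int \<Rightarrow> int \<Rightarrow> 'a \<Rightarrow> 'a \<Rightarrow> int \<Rightarrow> 'a" where
  "TT m n a b k = (if m + n = k then br a b else 0)
      + (if m + n - 1 = k then sc (of_int m) (nv a b) - sc (of_int n) (nv b a) else 0)"

lemma TT_add1[simp]: "TT m n (a + a') b k = TT m n a b k + TT m n a' b k"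
  by (auto simp: TT_def algebra_simps)
lemma TT_add2[simp]: "TT m n b (a + a') k = TT m n b a k + TT m n b a' k"
  by (auto simp: TT_def algebra_simps)
lemma TT_sc1[simp]: "TT m n (sc c a) b k = sc c (TT m n a b k)"
  by (auto simp: TT_def algebra_simps mult.commute)
lemma TT_sc2[simp]: "TT m n b (sc c a) k = sc c (TT m n b a k)"
  by (auto simp: TT_def algebra_simps mult.commute)
lemma TT_lin1: "additive (\<lambda>x. TT m n x y k)" by standard simp
lemma TT_zero1[simp]: "TT m n 0 y k = 0" and TT_sum1: "TT m n (sum f S) y k = (\<Sum>i\<in>S. TT m n (f i) y k)"
  using additive.zero[OF TT_lin1] additive.sum[OF TT_lin1] by auto
lemma TT_zero2[simp]: "TT m n y 0 k = 0" by (simp add: TT_def)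
lemma TT_if1: "TT m n (if P then x else 0) y k = (if P then TT m n x y k else 0)" by simp

lemma lb_TT: "loop_bracket sc br nv f g k = (\<Sum>m\<in>fsupp f. \<Sum>n\<in>fsupp g. TT m n (f m) (g n) k)"
  by (simp add: loop_bracket_def TT_def)

lemma lb_eq:
  assumes "finite S" "finite U" "fsupp f \<subseteq> S" "fsupp g \<subseteq> U"
  shows "loop_bracket sc br nv f g k = (\<Sum>m\<in>S. \<Sum>n\<in>U. TT m n (f m) (g n) k)"
proof -
  have "(\<Sum>m\<in>S. \<Sum>n\<in>U. TT m n (f m) (g n) k) = (\<Sum>m\<in>S. \<Sum>n\<in>fsupp g. TT m n (f m) (g n) k)"
    by (rule sum.cong[OF refl], rule sum.mono_neutral_right) (use assms in \<open>auto simp: fsupp_def\<close>)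
  also have "\<dots> = (\<Sum>m\<in>fsupp f. \<Sum>n\<in>fsupp g. TT m n (f m) (g n) k)"
    by (rule sum.mono_neutral_right) (use assms in \<open>auto simp: fsupp_def\<close>)
  finally show ?thesis by (simp add: lb_TT)
qed

definition PP :: "int set \<Rightarrow> int set \<Rightarrow> int set" where
  "PP F G = (\<lambda>(l,m). l+m) ` (F\<times>G) \<union> (\<lambda>(l,m). l+m-1) ` (F\<times>G)"

lemma PP_finite: "finite F \<Longrightarrow> finite G \<Longrightarrow> finite (PP F G)"
  by (simp add: PP_def)

lemma fsupp_lb:
  assumes "finite F" "finite G" "fsupp f \<subseteq> F" "fsupp g \<subseteq> G"
  shows "fsupp (loop_bracket sc br nv f g) \<subseteq> PP F G"
proof
  fix k assume k: "k \<in> fsupp (loop_bracket sc br nv f g)"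
  show "k \<in> PP F G"
  proof (rule ccontr)
    assume nk: "k \<notin> PP F G"
    have "\<And>m n. m \<in> F \<Longrightarrow> n \<in> G \<Longrightarrow> TT m n (f m) (g n) k = 0"
    proof -
      fix m n assume mn: "m \<in> F" "n \<in> G"
      then have "m + n \<noteq> k" "m + n - 1 \<noteq> k" using nk unfolding PP_def by force+
      then show "TT m n (f m) (g n) k = 0" by (simp add: TT_def)
    qed
    then have "loop_bracket sc br nv f g k = 0" by (simp add: lb_eq[OF assms])
    with k show False by (simp add: fsupp_def)
  qed
qed

lemma fsupp_phi: "fsupp (loop_phi al h) \<subseteq> fsupp h"
  by (auto simp: fsupp_def loop_phi_def)

definition JJ :: "int \<Rightarrow> int \<Rightarrow> int \<Rightarrow> 'a \<Rightarrow> 'a \<Rightarrow> 'a \<Rightarrow> int \<Rightarrow> 'a" where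
  "JJ l m n a b c k = TT (l+m) n (br a b) c k
     + TT (l+m-1) n (sc (of_int l) (nv a b) - sc (of_int m) (nv b a)) c k"

lemma inner_p:
  assumes "finite P" "l + m \<in> P" "l + m - 1 \<in> P"
  shows "(\<Sum>p\<in>P. TT p n (TT l m a b p) c k) = JJ l m n a b c k"
proof -
  have "(\<Sum>p\<in>P. TT p n (TT l m a b p) c k) = (\<Sum>p\<in>P. (if l + m = p then TT p n (br a b) c k else 0)
      + (if l + m - 1 = p then TT p n (sc (of_int l) (nv a b) - sc (of_int m) (nv b a)) c k else 0))"
    by (rule sum.cong[OF refl]) (simp add: TT_def[of l m] TT_if1)
  also have "\<dots> = JJ l m n a b c k"
    using assms by (simp add: sum.distrib JJ_def)
  finally show ?thesis .
qed

lemma jac_expand: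
  assumes F: "finite F" "fsupp f \<subseteq> F" and G: "finite G" "fsupp g \<subseteq> G"
    and H: "finite H" "fsupp h \<subseteq> H"
  shows "loop_bracket sc br nv (loop_bracket sc br nv f g) (loop_phi al h) k
     = (\<Sum>l\<in>F. \<Sum>m\<in>G. \<Sum>n\<in>H. JJ l m n (f l) (g m) (al (h n)) k)"
proof -
  let ?P = "PP F G"
  have fP: "finite ?P" using F G by (simp add: PP_finite)
  have "loop_bracket sc br nv (loop_bracket sc br nv f g) (loop_phi al h) k
     = (\<Sum>p\<in>?P. \<Sum>n\<in>H. TT p n (loop_bracket sc br nv f g p) (al (h n)) k)"
    by (subst lb_eq[OF fP H(1) fsupp_lb[OF F(1) G(1) F(2) G(2)] order_trans[OF fsupp_phi H(2)]])
      (simp add: loop_phi_def)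
  also have "\<dots> = (\<Sum>p\<in>?P. \<Sum>n\<in>H. \<Sum>l\<in>F. \<Sum>m\<in>G. TT p n (TT l m (f l) (g m) p) (al (h n)) k)"
    by (simp add: lb_eq[OF F(1) G(1) F(2) G(2)] TT_sum1)
  also have "\<dots> = (\<Sum>p\<in>?P. \<Sum>l\<in>F. \<Sum>m\<in>G. \<Sum>n\<in>H. TT p n (TT l m (f l) (g m) p) (al (h n)) k)"
    apply (rule sum.cong[OF refl])
    apply (subst sum.swap[where A=H and B=F])
    apply (rule sum.cong[OF refl])
    apply (subst sum.swap[where A=H and B=G])
    by simp
  also have "\<dots> = (\<Sum>l\<in>F. \<Sum>m\<in>G. \<Sum>n\<in>H. \<Sum>p\<in>?P. TT p n (TT l m (f l) (g m) p) (al (h n)) k)"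
    apply (subst sum.swap[where A="?P" and B=F])
    apply (rule sum.cong[OF refl])
    apply (subst sum.swap[where A="?P" and B=G])
    apply (rule sum.cong[OF refl])
    apply (subst sum.swap[where A="?P" and B=H])
    by simp
  also have "\<dots> = (\<Sum>l\<in>F. \<Sum>m\<in>G. \<Sum>n\<in>H. JJ l m n (f l) (g m) (al (h n)) k)"
    apply (intro sum.cong[OF refl])
    apply (rule inner_p[OF fP])
    by (force simp: PP_def)+
  finally show ?thesis .
qed

lemma PhiL_add: "length cs = length ds \<Longrightarrow>
  PhiL sc xs cs + PhiL sc xs ds = PhiL sc xs (map2 (+) cs ds)"
proof (induction xs arbitrary: cs ds)
  case Nil then show ?case by simp
next
  case (Cons x xs) then show ?case
    by (cases cs; cases ds) (simp_all add: algebra_simps)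
qed
lemma PhiL_diff: "length cs = length ds \<Longrightarrow>
  PhiL sc xs cs - PhiL sc xs ds = PhiL sc xs (map2 (-) cs ds)"
proof (induction xs arbitrary: cs ds)
  case Nil then show ?case by simp
next
  case (Cons x xs) then show ?case
    by (cases cs; cases ds) (simp_all add: add_diff_add scale_left_diff_distrib Cons.IH)
qed
lemma PhiL_neg: "- PhiL sc xs cs = PhiL sc xs (map uminus cs)"
  by (induction xs arbitrary: cs; case_tac cs) (simp_all add: algebra_simps)
lemma PhiL_scale: "sc d (PhiL sc xs cs) = PhiL sc xs (map ((*) d) cs)"
  by (induction xs arbitrary: cs; case_tac cs) (simp_all add: algebra_simps)
lemma PhiL_zero: "(\<forall>c\<in>set cs. c = 0) \<Longrightarrow> PhiL sc xs cs = 0"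
  by (induction xs arbitrary: cs; case_tac cs) simp_all

definition E1 :: "int \<Rightarrow> int \<Rightarrow> int \<Rightarrow> 'a \<Rightarrow> 'a \<Rightarrow> 'a \<Rightarrow> 'a" where
  "E1 l m n a b c = sc (of_int (l+m)) (nv (br a b) c) - sc (of_int n) (nv c (br a b))
      + br (sc (of_int l) (nv a b) - sc (of_int m) (nv b a)) c"
definition E2 :: "int \<Rightarrow> int \<Rightarrow> int \<Rightarrow> 'a \<Rightarrow> 'a \<Rightarrow> 'a \<Rightarrow> 'a" where
  "E2 l m n a b c = sc (of_int (l+m-1)) (nv (sc (of_int l) (nv a b) - sc (of_int m) (nv b a)) c)
      - sc (of_int n) (nv c (sc (of_int l) (nv a b) - sc (of_int m) (nv b a)))"

lemma D1_zero:
  assumes skew: "\<forall>x y. br x y = - br y x"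
    and compat: "\<forall>x y z. br (nv x y) (al z) - br (nv x z) (al y) + nv (br x y) (al z)
        - nv (br x z) (al y) - nv (al x) (br y z) = 0"
  shows "E1 l m n a b (al c) + E1 m n l b c (al a) + E1 n l m c a (al b) = 0"
proof -
  define NBab where "NBab = nv (br a b) (al c)"
  define NBbc where "NBbc = nv (br b c) (al a)"
  define NBca where "NBca = nv (br c a) (al b)"
  define BNab where "BNab = br (nv a b) (al c)"
  define BNba where "BNba = br (nv b a) (al c)"
  define BNbc where "BNbc = br (nv b c) (al a)"
  define BNcb where "BNcb = br (nv c b) (al a)"
  define BNca where "BNca = br (nv c a) (al b)"
  define BNac where "BNac = br (nv a c) (al b)"
  define xs where "xs = [NBab, NBbc, NBca, BNab, BNba, BNbc, BNcb, BNca, BNac]"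
  have sk: "nv (br x y) (al z) = - nv (br y x) (al z)" for x y z
    by (subst skew[rule_format, of x y]) simp
  have cp: "nv (al x) (br y z) = br (nv x y) (al z) - br (nv x z) (al y) + nv (br x y) (al z)
        - nv (br x z) (al y)" for x y z
  proof -
    have "br (nv x y) (al z) - br (nv x z) (al y) + nv (br x y) (al z)
        - nv (br x z) (al y) = nv (al x) (br y z)"
      using compat[rule_format, of x y z] by (simp only: right_minus_eq)
    then show ?thesis by (rule sym)
  qed
  have r: "nv (br a b) (al c) = PhiL sc xs [1,0,0,0,0,0,0,0,0]"
     "nv (br b c) (al a) = PhiL sc xs [0,1,0,0,0,0,0,0,0]"
     "nv (br c a) (al b) = PhiL sc xs [0,0,1,0,0,0,0,0,0]"
     "br (nv a b) (al c) = PhiL sc xs [0,0,0,1,0,0,0,0,0]"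
     "br (nv b a) (al c) = PhiL sc xs [0,0,0,0,1,0,0,0,0]"
     "br (nv b c) (al a) = PhiL sc xs [0,0,0,0,0,1,0,0,0]"
     "br (nv c b) (al a) = PhiL sc xs [0,0,0,0,0,0,1,0,0]"
     "br (nv c a) (al b) = PhiL sc xs [0,0,0,0,0,0,0,1,0]"
     "br (nv a c) (al b) = PhiL sc xs [0,0,0,0,0,0,0,0,1]"
    by (simp_all add: xs_def NBab_def NBbc_def NBca_def BNab_def BNba_def BNbc_def BNcb_def BNca_def BNac_def)
  have q: "nv (al a) (br b c) = PhiL sc xs [1,0,1,1,0,0,0,0,-1]"
     "nv (al b) (br c a) = PhiL sc xs [1,1,0,0,-1,1,0,0,0]"
     "nv (al c) (br a b) = PhiL sc xs [0,1,1,0,0,0,-1,1,0]"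
    by (simp_all add: xs_def NBab_def NBbc_def NBca_def BNab_def BNba_def BNbc_def BNcb_def
        BNca_def BNac_def cp[of a b c] cp[of b c a] cp[of c a b] sk[of a c] sk[of b a] sk[of c b]
        algebra_simps)
  show ?thesis
    unfolding E1_def
    apply (simp del: PhiL.simps add: r q PhiL_add PhiL_diff PhiL_neg PhiL_scale PhiL_zero)
    done
qed

lemma D2_zero:
  assumes ls: "\<forall>x y z. nv (nv x y) (al z) - nv (al x) (nv y z) = nv (nv y x) (al z) - nv (al y) (nv x z)"
    and rc: "\<forall>x y z. nv (nv x y) (al z) = nv (nv x z) (al y)"
  shows "E2 l m n a b (al c) + E2 m n l b c (al a) + E2 n l m c a (al b) = 0"
proof -
  define Pa where "Pa = nv (nv a b) (al c)"
  define Pb where "Pb = nv (nv b c) (al a)"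
  define Pc where "Pc = nv (nv c a) (al b)"
  define Qbac where "Qbac = nv (al b) (nv a c)"
  define Qcab where "Qcab = nv (al c) (nv a b)"
  define Qbca where "Qbca = nv (al b) (nv c a)"
  define xs where "xs = [Pa, Pb, Pc, Qbac, Qcab, Qbca]"
  have lq: "nv (al x) (nv y z) = nv (nv x y) (al z) - nv (nv y x) (al z) + nv (al y) (nv x z)" for x y z
  proof -
    have "nv (nv x y) (al z) - nv (al x) (nv y z) = nv (nv y x) (al z) - nv (al y) (nv x z)"
      using ls by blast
    then show ?thesis by (metis add_diff_cancel_left' add_diff_eq diff_add_cancel diff_diff_eq2)
  qed
  have r: "nv (nv a b) (al c) = PhiL sc xs [1,0,0,0,0,0]"
     "nv (nv a c) (al b) = PhiL sc xs [1,0,0,0,0,0]"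
     "nv (nv b c) (al a) = PhiL sc xs [0,1,0,0,0,0]"
     "nv (nv b a) (al c) = PhiL sc xs [0,1,0,0,0,0]"
     "nv (nv c a) (al b) = PhiL sc xs [0,0,1,0,0,0]"
     "nv (nv c b) (al a) = PhiL sc xs [0,0,1,0,0,0]"
     "nv (al b) (nv a c) = PhiL sc xs [0,0,0,1,0,0]"
     "nv (al c) (nv a b) = PhiL sc xs [0,0,0,0,1,0]"
     "nv (al b) (nv c a) = PhiL sc xs [0,0,0,0,0,1]"
    using rc[rule_format, of a b c] rc[rule_format, of b a c] rc[rule_format, of c b a]
    by (simp_all add: xs_def Pa_def Pb_def Pc_def Qbac_def Qcab_def Qbca_def)
  have q: "nv (al a) (nv b c) = PhiL sc xs [1,-1,0,1,0,0]"
     "nv (al a) (nv c b) = PhiL sc xs [1,0,-1,0,1,0]"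
     "nv (al c) (nv b a) = PhiL sc xs [0,-1,1,0,0,1]"
    using rc[rule_format, of a b c] rc[rule_format, of b a c] rc[rule_format, of c b a]
    by (simp_all add: lq[of a b c] lq[of a c b] lq[of c b a]
        xs_def Pa_def Pb_def Pc_def Qbac_def Qcab_def Qbca_def)
  show ?thesis
    unfolding E2_def
    apply (simp del: PhiL.simps add: r q PhiL_add PhiL_diff PhiL_neg PhiL_scale)
    apply (rule PhiL_zero)
    apply (simp add: algebra_simps)
    done
qed

lemma JJ_exp: "s = l + m + n \<Longrightarrow> JJ l m n a b c k = (if k = s then br (br a b) c else 0)
   + (if k = s - 1 then E1 l m n a b c else 0) + (if k = s - 2 then E2 l m n a b c else 0)"
  unfolding JJ_def TT_def E1_def E2_def by auto

lemma if_add0: "(if P then x else 0) + (if P then y else 0) = (if P then x + y else (0::'a))"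
  by simp

lemma JJ_cyc: "JJ l m n a b (al c) k + JJ m n l b c (al a) k + JJ n l m c a (al b) k
  = (if k = l+m+n then br (br a b) (al c) + br (br b c) (al a) + br (br c a) (al b) else 0)
  + (if k = l+m+n-1 then E1 l m n a b (al c) + E1 m n l b c (al a) + E1 n l m c a (al b) else 0)
  + (if k = l+m+n-2 then E2 l m n a b (al c) + E2 m n l b c (al a) + E2 n l m c a (al b) else 0)"
proof -
  let ?s = "l+m+n"
  have e1: "JJ l m n a b (al c) k = (if k = ?s then br (br a b) (al c) else 0)
   + (if k = ?s - 1 then E1 l m n a b (al c) else 0) + (if k = ?s - 2 then E2 l m n a b (al c) else 0)"
    by (rule JJ_exp) (rule refl)
  have e2: "JJ m n l b c (al a) k = (if k = ?s then br (br b c) (al a) else 0)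
   + (if k = ?s - 1 then E1 m n l b c (al a) else 0) + (if k = ?s - 2 then E2 m n l b c (al a) else 0)"
    by (rule JJ_exp) arith
  have e3: "JJ n l m c a (al b) k = (if k = ?s then br (br c a) (al b) else 0)
   + (if k = ?s - 1 then E1 n l m c a (al b) else 0) + (if k = ?s - 2 then E2 n l m c a (al b) else 0)"
    by (rule JJ_exp) arith
  show ?thesis unfolding e1 e2 e3
    by (cases "k = ?s"; cases "k = ?s - 1"; cases "k = ?s - 2") (simp_all only: simp_thms if_True if_False add_0_left add_0_right add.assoc)
qed

lemma TT_skew: assumes "\<forall>x y. br x y = - br y x" shows "TT m n a b k = - TT n m b a k"
proof -
  have h: "br a b = - br b a" using assms by blast
  show ?thesis unfolding TT_def
    by (cases "m+n = k"; cases "m+n-1 = k") (simp_all add: add.commute[of n m] h)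
qed

lemma lb_add1:
  assumes "x \<in> loop_space" "y \<in> loop_space" "z \<in> loop_space"
  shows "loop_bracket sc br nv (x + y) z = loop_bracket sc br nv x z + loop_bracket sc br nv y z"
proof (rule ext)
  fix k
  let ?S = "fsupp x \<union> fsupp y"
  have fS: "finite ?S" and fz: "finite (fsupp z)" using assms by (auto simp: loop_space_def)
  have s1: "fsupp (x + y) \<subseteq> ?S" by (auto simp: fsupp_def)
  have s2: "fsupp x \<subseteq> ?S" "fsupp y \<subseteq> ?S" by auto
  show "loop_bracket sc br nv (x + y) z k = (loop_bracket sc br nv x z + loop_bracket sc br nv y z) k"
    by (simp add: lb_eq[OF fS fz s1 order_refl] lb_eq[OF fS fz s2(1) order_refl]
        lb_eq[OF fS fz s2(2) order_refl] sum.distrib)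
qed

lemma lb_add2:
  assumes "x \<in> loop_space" "y \<in> loop_space" "z \<in> loop_space"
  shows "loop_bracket sc br nv z (x + y) = loop_bracket sc br nv z x + loop_bracket sc br nv z y"
proof (rule ext)
  fix k
  let ?S = "fsupp x \<union> fsupp y"
  have fS: "finite ?S" and fz: "finite (fsupp z)" using assms by (auto simp: loop_space_def)
  have s1: "fsupp (x + y) \<subseteq> ?S" by (auto simp: fsupp_def)
  have s2: "fsupp x \<subseteq> ?S" "fsupp y \<subseteq> ?S" by auto
  show "loop_bracket sc br nv z (x + y) k = (loop_bracket sc br nv z x + loop_bracket sc br nv z y) k"
    by (simp add: lb_eq[OF fz fS order_refl s1] lb_eq[OF fz fS order_refl s2(1)]
        lb_eq[OF fz fS order_refl s2(2)] sum.distrib)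
qed

lemma fsupp_scale: "fsupp (loop_scale sc c x) \<subseteq> fsupp x"
  by (auto simp: fsupp_def loop_scale_def)

lemma lb_sc1:
  assumes "x \<in> loop_space" "y \<in> loop_space"
  shows "loop_bracket sc br nv (loop_scale sc c x) y = loop_scale sc c (loop_bracket sc br nv x y)"
proof (rule ext)
  fix k
  have fx: "finite (fsupp x)" and fy: "finite (fsupp y)" using assms by (auto simp: loop_space_def)
  show "loop_bracket sc br nv (loop_scale sc c x) y k = loop_scale sc c (loop_bracket sc br nv x y) k"
    by (subst lb_eq[OF fx fy fsupp_scale order_refl])
      (simp add: loop_scale_def scale_sum_right lb_eq[OF fx fy order_refl order_refl])
qed

lemma lb_sc2:
  assumes "x \<in> loop_space" "y \<in> loop_space"
  shows "loop_bracket sc br nv y (loop_scale sc c x) = loop_scale sc c (loop_bracket sc br nv y x)"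
proof (rule ext)
  fix k
  have fx: "finite (fsupp x)" and fy: "finite (fsupp y)" using assms by (auto simp: loop_space_def)
  show "loop_bracket sc br nv y (loop_scale sc c x) k = loop_scale sc c (loop_bracket sc br nv y x) k"
    by (subst lb_eq[OF fy fx order_refl fsupp_scale])
      (simp add: loop_scale_def scale_sum_right lb_eq[OF fy fx order_refl order_refl])
qed

lemma GD_to_L:
  assumes GD: "hom_GD_bialgebra_on sc UNIV br nv al"
  shows "hom_lie_on (loop_scale sc) loop_space (loop_bracket sc br nv) (loop_phi al)"
proof -
  have skew: "\<forall>x y. br x y = - br y x"
    using GD unfolding hom_GD_bialgebra_on_def hom_lie_on_def by blast
  have jac: "\<forall>x y z. br (br x y) (al z) + br (br y z) (al x) + br (br z x) (al y) = 0"
    using GD unfolding hom_GD_bialgebra_on_def hom_lie_on_def by blast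
  have ls: "\<forall>x y z. nv (nv x y) (al z) - nv (al x) (nv y z) = nv (nv y x) (al z) - nv (al y) (nv x z)"
    using GD unfolding hom_GD_bialgebra_on_def hom_novikov_on_def by blast
  have rc: "\<forall>x y z. nv (nv x y) (al z) = nv (nv x z) (al y)"
    using GD unfolding hom_GD_bialgebra_on_def hom_novikov_on_def by blast
  have compat: "\<forall>x y z. br (nv x y) (al z) - br (nv x z) (al y) + nv (br x y) (al z)
        - nv (br x z) (al y) - nv (al x) (br y z) = 0"
    using GD unfolding hom_GD_bialgebra_on_def by blast
  have sub: "subspace_on (loop_scale sc) loop_space"
    unfolding subspace_on_def
  proof (intro conjI ballI allI)
    show "0 \<in> loop_space" by (simp add: loop_space_def fsupp_def)
  next
    fix x y :: "int \<Rightarrow> 'a" assume "x \<in> loop_space" "y \<in> loop_space"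
    then show "x + y \<in> loop_space" unfolding loop_space_def
      by (auto intro: finite_subset[of _ "fsupp x \<union> fsupp y"] simp: fsupp_def)
  next
    fix c and x :: "int \<Rightarrow> 'a" assume "x \<in> loop_space"
    then show "loop_scale sc c x \<in> loop_space" unfolding loop_space_def
      using fsupp_scale finite_subset by blast
  qed
  have bil: "bilinear_on (loop_scale sc) loop_space (loop_bracket sc br nv)"
    unfolding bilinear_on_def
  proof (intro conjI ballI allI)
    fix x y :: "int \<Rightarrow> 'a" assume "x \<in> loop_space" "y \<in> loop_space"
    then have fx: "finite (fsupp x)" and fy: "finite (fsupp y)" by (auto simp: loop_space_def)
    show "loop_bracket sc br nv x y \<in> loop_space" unfolding loop_space_def
      using finite_subset[OF fsupp_lb[OF fx fy order_refl order_refl] PP_finite[OF fx fy]] by simp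
  qed (simp_all add: lb_add1 lb_add2 lb_sc1 lb_sc2)
  have lin: "linear_on (loop_scale sc) loop_space (loop_phi al)"
    unfolding linear_on_def
  proof (intro conjI ballI allI)
    fix x :: "int \<Rightarrow> 'a" assume "x \<in> loop_space"
    then show "loop_phi al x \<in> loop_space" unfolding loop_space_def
      using fsupp_phi finite_subset by blast
  qed (auto simp: loop_phi_def loop_scale_def fun_eq_iff)
  have sk: "loop_bracket sc br nv x y = - loop_bracket sc br nv y x" for x y
  proof (rule ext)
    fix k
    show "loop_bracket sc br nv x y k = (- loop_bracket sc br nv y x) k"
      unfolding lb_TT fun_Compl_def
      apply (simp add: sum_negf[symmetric])
      apply (subst sum.swap)
      by (simp add: TT_skew[OF skew, of _ _ "x _"])
  qed
  have J: "loop_bracket sc br nv (loop_bracket sc br nv x y) (loop_phi al z)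
        + loop_bracket sc br nv (loop_bracket sc br nv y z) (loop_phi al x)
        + loop_bracket sc br nv (loop_bracket sc br nv z x) (loop_phi al y) = 0"
    if xyz: "x \<in> loop_space" "y \<in> loop_space" "z \<in> loop_space" for x y z
  proof (rule ext)
    fix k
    have fx: "finite (fsupp x)" and fy: "finite (fsupp y)" and fz: "finite (fsupp z)"
      using xyz by (auto simp: loop_space_def)
    let ?X = "fsupp x" and ?Y = "fsupp y" and ?Z = "fsupp z"
    have e1: "loop_bracket sc br nv (loop_bracket sc br nv x y) (loop_phi al z) k
      = (\<Sum>l\<in>?X. \<Sum>m\<in>?Y. \<Sum>n\<in>?Z. JJ l m n (x l) (y m) (al (z n)) k)"
      by (rule jac_expand[OF fx order_refl fy order_refl fz order_refl])
    have e2: "loop_bracket sc br nv (loop_bracket sc br nv y z) (loop_phi al x) k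
      = (\<Sum>m\<in>?Y. \<Sum>n\<in>?Z. \<Sum>l\<in>?X. JJ m n l (y m) (z n) (al (x l)) k)"
      by (rule jac_expand[OF fy order_refl fz order_refl fx order_refl])
    also have "\<dots> = (\<Sum>m\<in>?Y. \<Sum>l\<in>?X. \<Sum>n\<in>?Z. JJ m n l (y m) (z n) (al (x l)) k)"
      by (rule sum.cong[OF refl], rule sum.swap)
    also have "\<dots> = (\<Sum>l\<in>?X. \<Sum>m\<in>?Y. \<Sum>n\<in>?Z. JJ m n l (y m) (z n) (al (x l)) k)"
      by (rule sum.swap)
    finally have e2: "loop_bracket sc br nv (loop_bracket sc br nv y z) (loop_phi al x) k
      = (\<Sum>l\<in>?X. \<Sum>m\<in>?Y. \<Sum>n\<in>?Z. JJ m n l (y m) (z n) (al (x l)) k)" .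
    have e3: "loop_bracket sc br nv (loop_bracket sc br nv z x) (loop_phi al y) k
      = (\<Sum>n\<in>?Z. \<Sum>l\<in>?X. \<Sum>m\<in>?Y. JJ n l m (z n) (x l) (al (y m)) k)"
      by (rule jac_expand[OF fz order_refl fx order_refl fy order_refl])
    also have "\<dots> = (\<Sum>l\<in>?X. \<Sum>n\<in>?Z. \<Sum>m\<in>?Y. JJ n l m (z n) (x l) (al (y m)) k)"
      by (rule sum.swap)
    also have "\<dots> = (\<Sum>l\<in>?X. \<Sum>m\<in>?Y. \<Sum>n\<in>?Z. JJ n l m (z n) (x l) (al (y m)) k)"
      by (rule sum.cong[OF refl], rule sum.swap)
    finally have e3: "loop_bracket sc br nv (loop_bracket sc br nv z x) (loop_phi al y) k
      = (\<Sum>l\<in>?X. \<Sum>m\<in>?Y. \<Sum>n\<in>?Z. JJ n l m (z n) (x l) (al (y m)) k)" .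
    have z: "JJ l m n a b (al c) k + JJ m n l b c (al a) k + JJ n l m c a (al b) k = 0" for l m n a b c
      by (simp add: JJ_cyc D1_zero[OF skew compat] D2_zero[OF ls rc] jac[rule_format])
    show "(loop_bracket sc br nv (loop_bracket sc br nv x y) (loop_phi al z)
        + loop_bracket sc br nv (loop_bracket sc br nv y z) (loop_phi al x)
        + loop_bracket sc br nv (loop_bracket sc br nv z x) (loop_phi al y)) k = 0 k"
      by (simp add: e1 e2 e3 sum.distrib[symmetric] z)
  qed
  show ?thesis unfolding hom_lie_on_def
    using sub bil lin sk J by blast
qed

definition mono :: "'a \<Rightarrow> int \<Rightarrow> int \<Rightarrow> 'a" where
  "mono u p = (\<lambda>k. if k = p then u else 0)"

lemma fsupp_mono: "fsupp (mono u p) \<subseteq> {p}"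
  by (auto simp: fsupp_def mono_def)

lemma mono_in: "mono u p \<in> loop_space"
  unfolding loop_space_def using finite_subset[OF fsupp_mono] by simp

lemma lb_mono: "loop_bracket sc br nv (mono a l) (mono b m) k = TT l m a b k"
  by (subst lb_eq[OF _ _ fsupp_mono fsupp_mono]) (simp_all add: mono_def)

lemma jac_mono: "loop_bracket sc br nv (loop_bracket sc br nv (mono a l) (mono b m)) (loop_phi al (mono c n)) k
   = JJ l m n a b (al c) k"
  by (subst jac_expand[OF _ fsupp_mono _ fsupp_mono _ fsupp_mono]) (simp_all add: mono_def)

lemma L_to_GD:
  assumes L: "hom_lie_on (loop_scale sc) loop_space (loop_bracket sc br nv) (loop_phi al)"
  shows "hom_GD_bialgebra_on sc UNIV br nv al"
proof -
  have Lsk: "\<forall>x\<in>loop_space. \<forall>y\<in>loop_space. loop_bracket sc br nv x y = - loop_bracket sc br nv y x"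
    using L unfolding hom_lie_on_def by blast
  have LJ: "\<forall>x\<in>loop_space. \<forall>y\<in>loop_space. \<forall>z\<in>loop_space.
      loop_bracket sc br nv (loop_bracket sc br nv x y) (loop_phi al z)
    + loop_bracket sc br nv (loop_bracket sc br nv y z) (loop_phi al x)
    + loop_bracket sc br nv (loop_bracket sc br nv z x) (loop_phi al y) = 0"
    using L unfolding hom_lie_on_def by blast
  have cyc: "JJ l m n a b (al c) k + JJ m n l b c (al a) k + JJ n l m c a (al b) k = 0" for l m n a b c k
  proof -
    have "(loop_bracket sc br nv (loop_bracket sc br nv (mono a l) (mono b m)) (loop_phi al (mono c n))
    + loop_bracket sc br nv (loop_bracket sc br nv (mono b m) (mono c n)) (loop_phi al (mono a l))
    + loop_bracket sc br nv (loop_bracket sc br nv (mono c n) (mono a l)) (loop_phi al (mono b m))) k = 0"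
      using LJ[rule_format, OF mono_in mono_in mono_in] by simp
    then show ?thesis by (simp add: jac_mono)
  qed
  have skew: "br x y = - br y x" for x y
  proof -
    have "loop_bracket sc br nv (mono x 0) (mono y 0) = - loop_bracket sc br nv (mono y 0) (mono x 0)"
      by (rule Lsk[rule_format, OF mono_in mono_in])
    then have "loop_bracket sc br nv (mono x 0) (mono y 0) 0 = - loop_bracket sc br nv (mono y 0) (mono x 0) 0"
      by (simp add: fun_eq_iff)
    then show ?thesis by (simp add: lb_mono TT_def)
  qed
  have jac: "br (br x y) (al z) + br (br y z) (al x) + br (br z x) (al y) = 0" for x y z
    using cyc[of 0 0 0 x y z 0] by (simp add: JJ_cyc)
  have c1: "E1 1 0 0 x y (al z) + E1 0 0 1 y z (al x) + E1 0 1 0 z x (al y) = 0" for x y z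
    using cyc[of 1 0 0 x y z 0] by (simp add: JJ_cyc)
  have compat: "br (nv x y) (al z) - br (nv x z) (al y) + nv (br x y) (al z)
        - nv (br x z) (al y) - nv (al x) (br y z) = 0" for x y z
  proof -
    have h: "nv (br x z) (al y) = - nv (br z x) (al y)" by (subst skew) simp
    show ?thesis using c1[of x y z] by (simp add: E1_def h algebra_simps)
  qed
  have c2: "E2 2 0 0 x y (al z) + E2 0 0 2 y z (al x) + E2 0 2 0 z x (al y) = 0" for x y z
    using cyc[of 2 0 0 x y z 0] by (simp add: JJ_cyc)
  have rc: "nv (nv x y) (al z) = nv (nv x z) (al y)" for x y z
  proof -
    have "sc 2 (nv (nv x y) (al z) - nv (nv x z) (al y)) = 0"
      using c2[of x y z] by (simp add: E2_def scale_right_diff_distrib)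
    then show ?thesis by simp
  qed
  have c3: "E2 1 1 0 x y (al z) + E2 1 0 1 y z (al x) + E2 0 1 1 z x (al y) = 0" for x y z
    using cyc[of 1 1 0 x y z 0] by (simp add: JJ_cyc)
  have ls: "nv (nv x y) (al z) - nv (al x) (nv y z) = nv (nv y x) (al z) - nv (al y) (nv x z)" for x y z
    using c3[of x y z] by (simp add: E2_def algebra_simps)
  have sub: "subspace_on sc UNIV" by (simp add: subspace_on_def)
  show ?thesis unfolding hom_GD_bialgebra_on_def hom_lie_on_def hom_novikov_on_def
    using sub brb nvb all skew jac rc ls compat by blast
qed

end

theorem theorem5p1:
  fixes sc :: "complex \<Rightarrow> 'a::ab_group_add \<Rightarrow> 'a"
    and br nv :: "'a \<Rightarrow> 'a \<Rightarrow> 'a"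
    and al :: "'a \<Rightarrow> 'a"
  assumes "vector_space sc"
    and "bilinear_on sc UNIV br"
    and "bilinear_on sc UNIV nv"
    and "linear_on sc UNIV al"
  shows "hom_lie_on (loop_scale sc) loop_space (loop_bracket sc br nv) (loop_phi al)
     \<longleftrightarrow> hom_GD_bialgebra_on sc UNIV br nv al"
proof -
  interpret G: GDS sc br nv al
    using assms by (simp add: GDS_def GDS_axioms_def)
  show ?thesis using G.GD_to_L G.L_to_GD by blast
qed

end
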